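(* Let $p_1,\dots,p_n$ be distinct primes and $G=C_{p_1\cdots p_n}$ the cyclic group of order $p_1\cdots p_n$. Then the width of $G$ equals $n$.
   Context: For a finite group $G$, an arrow is a pair $(H,K)$ of subgroups with $H\leqslant K$; identity arrows are those with $H=K$. A $G$-transfer system is a set of arrows containing all identities and closed under composition ($(H,K),(K,L)\Rightarrow(H,L)$), conjugation ($(H,K)\Rightarrow(gHg^{-1},gKg^{-1})$) and restriction ($(H,K)$ and $L\leqslant K\Rightarrow(H\cap L,L)$). For a set $S$ of non-identity arrows, $\langle S\rangle$ is the smallest transfer system containing $S$. A minimal generating set of a transfer system $\mathsf{T}$ is a set $S\subseteq\mathsf{T}$ of non-identity arrows with $\langle S\rangle=\mathsf{T}$ and $\langle S\setminus\{s\}\rangle\neq\mathsf{T}$ for all $s\in S$; all such sets have the same cardinality $\mathfrak{m}(\mathsf{T})$. The width of $G$ is $\mathfrak{m}$ of the complete transfer system (the transfer system consisting of all arrows). *)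

theory Defs
  imports "HOL-Algebra.Algebra" "HOL-Computational_Algebra.Primes"
begin

definition arrows :: "('a, 'b) monoid_scheme \<Rightarrow> ('a set \<times> 'a set) set" where
  "arrows G = {(H, K). subgroup H G \<and> subgroup K G \<and> H \<subseteq> K}"

definition conj_set :: "('a, 'b) monoid_scheme \<Rightarrow> 'a \<Rightarrow> 'a set \<Rightarrow> 'a set" where
  "conj_set G g H = (\<lambda>h. g \<otimes>\<^bsub>G\<^esub> h \<otimes>\<^bsub>G\<^esub> inv\<^bsub>G\<^esub> g) ` H"

definition transfer_system :: "('a, 'b) monoid_scheme \<Rightarrow> ('a set \<times> 'a set) set \<Rightarrow> bool" where
  "transfer_system G T \<longleftrightarrow>
     T \<subseteq> arrows G \<and>
     (\<forall>H. subgroup H G \<longrightarrow> (H, H) \<in> T) \<and>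
     (\<forall>H K L. (H, K) \<in> T \<and> (K, L) \<in> T \<longrightarrow> (H, L) \<in> T) \<and>
     (\<forall>H K g. (H, K) \<in> T \<and> g \<in> carrier G \<longrightarrow> (conj_set G g H, conj_set G g K) \<in> T) \<and>
     (\<forall>H K L. (H, K) \<in> T \<and> subgroup L G \<and> L \<subseteq> K \<longrightarrow> (H \<inter> L, L) \<in> T)"

definition generated_ts :: "('a, 'b) monoid_scheme \<Rightarrow> ('a set \<times> 'a set) set \<Rightarrow> ('a set \<times> 'a set) set" where
  "generated_ts G S = \<Inter>{T. transfer_system G T \<and> S \<subseteq> T}"

definition minimal_generating_set ::
  "('a, 'b) monoid_scheme \<Rightarrow> ('a set \<times> 'a set) set \<Rightarrow> ('a set \<times> 'a set) set \<Rightarrow> bool" where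
  "minimal_generating_set G S T \<longleftrightarrow>
     S \<subseteq> T \<and> (\<forall>(H, K) \<in> S. H \<noteq> K) \<and> generated_ts G S = T \<and>
     (\<forall>s \<in> S. generated_ts G (S - {s}) \<noteq> T)"

text \<open>m(T): the (common) cardinality of minimal generating sets of T.\<close>
definition mgen :: "('a, 'b) monoid_scheme \<Rightarrow> ('a set \<times> 'a set) set \<Rightarrow> nat" where
  "mgen G T = card (SOME S. minimal_generating_set G S T)"

definition width :: "('a, 'b) monoid_scheme \<Rightarrow> nat" where
  "width G = mgen G (arrows G)"

end

theory Submission
  imports Defs
begin

lemma (in group) subgroup_pow_closed:
  assumes "subgroup H G" "x \<in> H" shows "x [^] (m::nat) \<in> H"
proof (induction m)
  case 0 then show ?case using assms by (simp add: subgroup.one_closed)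
next
  case (Suc m)
  have "x \<in> carrier G" using assms subgroup.subset by blast
  then show ?case using Suc assms by (simp add: subgroup.m_closed)
qed

lemma nt_dvd:
  fixes p :: "nat \<Rightarrow> nat"
  assumes "\<forall>i<n. Factorial_Ring.prime (p i)" "inj_on p {..<n}" "d dvd (\<Prod>i<n. p i)" "e > 0"
    "\<forall>i<n. p i dvd d \<longrightarrow> p i dvd e"
  shows "d dvd e"
  using assms
proof (induction n arbitrary: d)
  case 0 then show ?case by simp
next
  case (Suc n)
  have pr: "Factorial_Ring.prime (p n)" using Suc.prems by simp
  have inj: "inj_on p {..<n}" using Suc.prems(2) by (rule inj_on_subset) auto
  have cop: "\<not> p n dvd (\<Prod>i<n. p i)"
  proof
    assume "p n dvd (\<Prod>i<n. p i)"
    then obtain i where i: "i < n" "p n dvd p i" using pr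
      by (auto simp: prime_dvd_prod_iff)
    then have "p n = p i" using Suc.prems(1) pr by (simp add: primes_dvd_imp_eq)
    then show False using Suc.prems(2) i(1) by (auto dest: inj_onD)
  qed
  have dv: "d dvd (\<Prod>i<n. p i) * p n" using Suc.prems(3) by (simp add: mult.commute)
  show ?case
  proof (cases "p n dvd d")
    case True
    then obtain d' where d': "d = p n * d'" by blast
    have "d' dvd (\<Prod>i<n. p i)" using dv d' pr
      by (metis dvd_mult_cancel1 mult.commute not_prime_0 nat_mult_dvd_cancel_disj zero_less_iff_neq_zero)
    moreover have "\<forall>i<n. p i dvd d' \<longrightarrow> p i dvd e" using Suc.prems(5) d' by auto
    ultimately have "d' dvd e" using Suc.IH[of d'] Suc.prems inj by auto
    moreover have "p n dvd e" using Suc.prems(5) True by auto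
    moreover have "coprime (p n) d'"
      using cop \<open>d' dvd (\<Prod>i<n. p i)\<close> pr
      by (meson dvd_trans prime_imp_coprime)
    ultimately show ?thesis using d' by (simp add: divides_mult)
  next
    case False
    then have "coprime d (p n)" using pr
      by (metis prime_imp_coprime coprime_commute)
    then have "d dvd (\<Prod>i<n. p i)" using dv
      using coprime_dvd_mult_left_iff by blast
    then show ?thesis using Suc.IH[of d] Suc.prems inj by auto
  qed
qed

locale cyc = group G for G (structure) +
  fixes g
  assumes g: "g \<in> carrier G" and gen: "carrier G = generate G {g}"
    and fin: "finite (carrier G)"
begin

lemma carr: "carrier G = {g [^] (k::nat) | k. True}"
  using generate_pow_on_finite_carrier[OF fin g] gen by simp

lemma ordg: "ord g = order G"
  using generate_pow_card[OF g] gen by (simp add: order_def)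

lemma Npos: "order G > 0"
  using fin g by (simp add: order_gt_0_iff_finite)

lemma pow_eq: "g [^] (a::nat) = g [^] (b::nat) \<longleftrightarrow> a mod order G = b mod order G"
proof -
  have "g [^] a = g [^] b \<longleftrightarrow> g [^] int a = g [^] int b" by (simp add: int_pow_int)
  also have "\<dots> \<longleftrightarrow> int (ord g) dvd (int b - int a)" by (rule int_pow_eq[OF g])
  also have "\<dots> \<longleftrightarrow> int b mod int (order G) = int a mod int (order G)"
    by (simp add: ordg mod_eq_dvd_iff)
  also have "\<dots> \<longleftrightarrow> a mod order G = b mod order G"
    by (metis of_nat_eq_iff zmod_int)
  finally show ?thesis .
qed

lemma commG: "comm_group G"
proof (rule group_comm_groupI)
  fix x y assume "x \<in> carrier G" "y \<in> carrier G"
  then obtain a b where "x = g [^] (a::nat)" "y = g [^] (b::nat)" using carr by auto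
  then show "x \<otimes> y = y \<otimes> x" using g by (simp add: nat_pow_mult add.commute)
qed

definition dH :: "'a set \<Rightarrow> nat" where
  "dH H = (LEAST k. 0 < k \<and> g [^] k \<in> H)"

lemma dH:
  assumes H: "subgroup H G"
  shows "0 < dH H" "g [^] k \<in> H \<longleftrightarrow> dH H dvd k"
proof -
  have ex: "0 < order G \<and> g [^] order G \<in> H"
    using Npos pow_order_eq_1[OF g] subgroup.one_closed[OF H] by simp
  have L: "0 < dH H \<and> g [^] dH H \<in> H"
    unfolding dH_def by (rule LeastI[of _ "order G"]) (rule ex)
  then show "0 < dH H" by simp
  show "g [^] k \<in> H \<longleftrightarrow> dH H dvd k"
  proof
    assume "dH H dvd k"
    then obtain m where "k = dH H * m" by blast
    then have "g [^] k = (g [^] dH H) [^] m" using g by (simp add: nat_pow_pow)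
    then show "g [^] k \<in> H" using subgroup_pow_closed[OF H] L by simp
  next
    assume k: "g [^] k \<in> H"
    define d where "d = dH H"
    have "k = d * (k div d) + k mod d" by simp
    then have "g [^] k = g [^] (d * (k div d)) \<otimes> g [^] (k mod d)"
      using g by (metis nat_pow_mult)
    then have "g [^] (k mod d) = inv (g [^] (d * (k div d))) \<otimes> g [^] k"
      using g by (simp add: m_assoc[symmetric])
    moreover have "g [^] (d * (k div d)) \<in> H"
      using L subgroup_pow_closed[OF H, of "g [^] d" "k div d"] g
      by (simp add: d_def nat_pow_pow)
    ultimately have "g [^] (k mod d) \<in> H"
      using k H by (simp add: subgroup.m_closed subgroup.m_inv_closed)
    moreover have "k mod d < d" using L d_def by simp
    moreover have "\<not> (0 < k mod d \<and> g [^] (k mod d) \<in> H)"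
      using \<open>k mod d < d\<close> unfolding d_def dH_def by (rule not_less_Least)
    ultimately have "\<not> (0 < k mod d)" by simp
    then show "dH H dvd k" using d_def by auto
  qed
qed

lemma dH_dvd_N: "subgroup H G \<Longrightarrow> dH H dvd order G"
  using dH(2)[of H "order G"] pow_order_eq_1[OF g] subgroup.one_closed by auto

lemma sub_iff:
  assumes H: "subgroup H G" and K: "subgroup K G"
  shows "H \<subseteq> K \<longleftrightarrow> dH K dvd dH H"
proof
  assume "H \<subseteq> K"
  then show "dH K dvd dH H" using dH(2)[OF H, of "dH H"] dH(2)[OF K, of "dH H"] by auto
next
  assume dv: "dH K dvd dH H"
  show "H \<subseteq> K"
  proof
    fix x assume x: "x \<in> H"
    then have "x \<in> carrier G" using subgroup.subset[OF H] by blast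
    then obtain k where k: "x = g [^] (k::nat)" using carr by auto
    then have "dH H dvd k" using dH(2)[OF H] x by simp
    then have "dH K dvd k" using dv by (rule dvd_trans[rotated])
    then show "x \<in> K" using dH(2)[OF K] k by simp
  qed
qed

lemma eq_iff:
  assumes H: "subgroup H G" and K: "subgroup K G"
  shows "H = K \<longleftrightarrow> dH H = dH K"
  using sub_iff[OF H K] sub_iff[OF K H] by (auto intro: dvd_antisym)

lemma dH_carrier: "dH (carrier G) = 1"
  using dH(2)[OF subgroup_self, of 1] g by simp

definition Sd :: "nat \<Rightarrow> 'a set" where
  "Sd d = {g [^] k | k::nat. d dvd k}"

lemma Sd_sub:
  assumes "d dvd order G" shows "subgroup (Sd d) G"
proof (rule subgroupI)
  show "Sd d \<subseteq> carrier G" unfolding Sd_def using g by auto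
  show "Sd d \<noteq> {}" unfolding Sd_def by auto
next
  fix a assume "a \<in> Sd d"
  then obtain k where k: "a = g [^] k" "d dvd k" unfolding Sd_def by auto
  have e: "k * (order G - 1) + k = k * order G" using Npos by (cases "order G") auto
  have "g [^] (k * (order G - 1)) \<otimes> g [^] k = g [^] (k * order G)"
    using g by (simp only: nat_pow_mult e)
  also have "\<dots> = \<one>" using g by (metis nat_pow_pow pow_order_eq_1 nat_pow_closed)
  finally have "inv a = g [^] (k * (order G - 1))" using k g by (simp add: inv_equality)
  then show "inv a \<in> Sd d" unfolding Sd_def using k by auto
next
  fix a b assume "a \<in> Sd d" "b \<in> Sd d"
  then obtain k l where "a = g [^] k" "d dvd k" "b = g [^] l" "d dvd l" unfolding Sd_def by auto
  then show "a \<otimes> b \<in> Sd d" unfolding Sd_def using g by (auto simp: nat_pow_mult)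
qed

lemma dH_Sd:
  assumes d: "d dvd order G" shows "dH (Sd d) = d"
proof (rule dvd_antisym)
  have S: "subgroup (Sd d) G" by (rule Sd_sub[OF d])
  show "dH (Sd d) dvd d" using dH(2)[OF S, of d] unfolding Sd_def by auto
  have "g [^] dH (Sd d) \<in> Sd d" using dH(2)[OF S] by simp
  then obtain k where k: "g [^] dH (Sd d) = g [^] k" "d dvd k" unfolding Sd_def by auto
  then have "dH (Sd d) mod order G = k mod order G" using pow_eq by simp
  then have "dH (Sd d) mod d = k mod d" using d by (metis mod_mod_cancel)
  then show "d dvd dH (Sd d)" using k(2) by (simp add: mod_eq_0_iff_dvd)
qed

end

theorem lemma5p1:
  fixes G :: "('a, 'b) monoid_scheme" and p :: "nat \<Rightarrow> nat" and n :: nat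
  assumes "group G"
    and "finite (carrier G)"
    and "\<exists>g \<in> carrier G. carrier G = generate G {g}"
    and "\<forall>i < n. Factorial_Ring.prime (p i)"
    and "inj_on p {..<n}"
    and "order G = (\<Prod>i<n. p i)"
  shows "width G = n"
proof -
  interpret group G by fact
  obtain g where g: "g \<in> carrier G" "carrier G = generate G {g}" using assms(3) by blast
  interpret C: cyc G g using g assms(2) by unfold_locales auto
  define M where "M i = C.Sd (p i)" for i
  have pdvd: "p i dvd order G" if "i < n" for i
    using that assms(6) by (simp add: dvd_prodI)
  have Msub: "subgroup (M i) G" if "i < n" for i
    using C.Sd_sub[OF pdvd[OF that]] M_def by simp
  have dM: "C.dH (M i) = p i" if "i < n" for i
    using C.dH_Sd[OF pdvd[OF that]] M_def by simp
  have pgt1: "p i > 1" if "i < n" for i using assms(4) that prime_gt_1_nat by blast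
  have Mne: "M i \<noteq> carrier G" if "i < n" for i
    using C.eq_iff[OF Msub[OF that] subgroup_self] dM[OF that] C.dH_carrier pgt1[OF that] by simp
  have Mmax: "K = M i \<or> K = carrier G" if "i < n" "subgroup K G" "M i \<subseteq> K" for i K
  proof -
    have "C.dH K dvd p i" using C.sub_iff[OF Msub[OF that(1)] that(2)] that(3) dM[OF that(1)] by simp
    then have "C.dH K = 1 \<or> C.dH K = p i" using assms(4) that(1) prime_nat_iff by blast
    then show ?thesis
      using C.eq_iff[OF that(2) Msub[OF that(1)]] C.eq_iff[OF that(2) subgroup_self]
        dM[OF that(1)] C.dH_carrier by auto
  qed
  have F3: "\<exists>i<n. H \<subseteq> M i \<and> \<not> K \<subseteq> M i"
    if H: "subgroup H G" and K: "subgroup K G" and HK: "H \<subseteq> K" "H \<noteq> K" for H K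
  proof (rule ccontr)
    assume "\<not> ?thesis"
    then have "\<forall>i<n. p i dvd C.dH H \<longrightarrow> p i dvd C.dH K"
      using C.sub_iff[OF H Msub] C.sub_iff[OF K Msub] dM by auto
    then have "C.dH H dvd C.dH K"
      using nt_dvd[OF assms(4) assms(5)] C.dH_dvd_N[OF H] assms(6) C.dH(1)[OF K] by auto
    moreover have "C.dH K dvd C.dH H" using C.sub_iff[OF H K] HK by simp
    ultimately have "C.dH H = C.dH K" by (rule dvd_antisym)
    then show False using C.eq_iff[OF H K] HK by simp
  qed
  have Minj: "inj_on (\<lambda>i. (M i, carrier G)) {..<n}"
  proof (rule inj_onI)
    fix i j assume "i \<in> {..<n}" "j \<in> {..<n}" "(M i, carrier G) = (M j, carrier G)"
    then have "p i = p j" using dM by (metis lessThan_iff prod.inject)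
    then show "i = j" using assms(5) \<open>i \<in> {..<n}\<close> \<open>j \<in> {..<n}\<close> by (metis inj_onD)
  qed
  have comm: "comm_group G" by (rule C.commG)
  have conj: "conj_set G x H = H" if "x \<in> carrier G" "H \<subseteq> carrier G" for x H
  proof -
    have "x \<otimes>\<^bsub>G\<^esub> h \<otimes>\<^bsub>G\<^esub> inv\<^bsub>G\<^esub> x = h" if "h \<in> H" for h
    proof -
      have h: "h \<in> carrier G" using that \<open>H \<subseteq> carrier G\<close> by blast
      have "x \<otimes>\<^bsub>G\<^esub> h \<otimes>\<^bsub>G\<^esub> inv\<^bsub>G\<^esub> x = h \<otimes>\<^bsub>G\<^esub> x \<otimes>\<^bsub>G\<^esub> inv\<^bsub>G\<^esub> x"
        using comm_monoid.m_comm[OF comm_group.axioms(1)[OF comm] h \<open>x \<in> carrier G\<close>] by simp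
      also have "\<dots> = h" using h \<open>x \<in> carrier G\<close> by (simp add: m_assoc)
      finally show ?thesis .
    qed
    then show ?thesis unfolding conj_set_def by force
  qed
  have subcar: "H \<subseteq> carrier G" if "subgroup H G" for H using that subgroup.subset by blast
  have TSall: "transfer_system G (arrows G)"
    unfolding transfer_system_def
  proof (intro conjI allI impI)
    show "arrows G \<subseteq> arrows G" by simp
    show "(H, H) \<in> arrows G" if "subgroup H G" for H using that unfolding arrows_def by simp
    show "(H, L) \<in> arrows G" if "(H, K) \<in> arrows G \<and> (K, L) \<in> arrows G" for H K L
      using that unfolding arrows_def by auto
    show "(conj_set G x H, conj_set G x K) \<in> arrows G"
      if a: "(H, K) \<in> arrows G \<and> x \<in> carrier G" for H K x
    proof -
      have "subgroup H G" "subgroup K G" using a unfolding arrows_def by auto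
      then have "H \<subseteq> carrier G" "K \<subseteq> carrier G" using subgroup.subset by blast+
      then have "conj_set G x H = H" "conj_set G x K = K" using conj a by simp_all
      then show ?thesis using a by simp
    qed
    show "(H \<inter> L, L) \<in> arrows G" if a: "(H, K) \<in> arrows G \<and> subgroup L G \<and> L \<subseteq> K" for H K L
    proof -
      have "subgroup H G" using a unfolding arrows_def by auto
      then have "subgroup (H \<inter> L) G" using subgroup_Int a by blast
      then show ?thesis using a unfolding arrows_def by auto
    qed
  qed
  have TSi: "transfer_system G (arrows G - {(M i, carrier G)})" if i: "i < n" for i
  proof -
    let ?s = "(M i, carrier G)"
    have 1: "\<forall>H. subgroup H G \<longrightarrow> (H, H) \<in> arrows G - {?s}"
      using Mne[OF i] unfolding arrows_def by auto
    have 2: "(H, L) \<in> arrows G - {?s}"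
      if "(H, K) \<in> arrows G - {?s}" "(K, L) \<in> arrows G - {?s}" for H K L
    proof -
      have "(H, L) \<in> arrows G" using that unfolding arrows_def by auto
      moreover have "(H, L) \<noteq> ?s"
      proof
        assume "(H, L) = ?s"
        then have "H = M i" "L = carrier G" by auto
        moreover have "subgroup K G" "H \<subseteq> K" using that unfolding arrows_def by auto
        ultimately have "K = M i \<or> K = carrier G" using Mmax[OF i] by blast
        then show False using that \<open>H = M i\<close> \<open>L = carrier G\<close> by auto
      qed
      ultimately show ?thesis by simp
    qed
    have 3: "(conj_set G x H, conj_set G x K) \<in> arrows G - {?s}"
      if a: "(H, K) \<in> arrows G - {?s}" "x \<in> carrier G" for H K x
    proof -
      have "subgroup H G" "subgroup K G" using a unfolding arrows_def by auto
      then have "H \<subseteq> carrier G" "K \<subseteq> carrier G" using subgroup.subset by blast+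
      then have "conj_set G x H = H" "conj_set G x K = K" using conj a by simp_all
      then show ?thesis using a by simp
    qed
    have 4: "(H \<inter> L, L) \<in> arrows G - {?s}"
      if "(H, K) \<in> arrows G - {?s}" "subgroup L G" "L \<subseteq> K" for H K L
    proof -
      have "subgroup H G" using that unfolding arrows_def by auto
      then have "subgroup (H \<inter> L) G" using subgroup_Int that(2) by blast
      then have "(H \<inter> L, L) \<in> arrows G" using that unfolding arrows_def by auto
      moreover have "(H \<inter> L, L) \<noteq> ?s"
      proof
        assume "(H \<inter> L, L) = ?s"
        then have a: "H \<inter> L = M i" "L = carrier G" by auto
        have "subgroup H G" "subgroup K G" using that unfolding arrows_def by auto
        have "H \<subseteq> carrier G" "K \<subseteq> carrier G" using \<open>subgroup H G\<close> \<open>subgroup K G\<close> using subgroup.subset by blast+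
        then have "K = carrier G" "H = M i" using a \<open>L \<subseteq> K\<close> by auto
        then show False using that by auto
      qed
      ultimately show ?thesis by simp
    qed
    show ?thesis unfolding transfer_system_def
      apply (intro conjI)
      subgoal by blast
      subgoal using 1 by blast
      subgoal using 2 by blast
      subgoal using 3 by blast
      subgoal using 4 by blast
      done
  qed
  define Ms where "Ms = (\<lambda>i. (M i, carrier G)) ` {..<n}"
  have gen_le: "generated_ts G S \<subseteq> T" if "transfer_system G T" "S \<subseteq> T" for S T
    using that unfolding generated_ts_def by blast
  have mono: "generated_ts G S \<subseteq> generated_ts G S'" if "S \<subseteq> S'" for S S'
    using that unfolding generated_ts_def by blast
  have all_in: "arrows G \<subseteq> T" if T: "transfer_system G T" "Ms \<subseteq> T" for T
  proof -
    have main: "(H, K) \<in> T" if "subgroup H G" "subgroup K G" "H \<subseteq> K" for H K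
      using that
    proof (induction "card K" arbitrary: H K rule: less_induct)
      case less
      show ?case
      proof (cases "H = K")
        case True then show ?thesis using T(1) less.prems unfolding transfer_system_def by auto
      next
        case False
        then obtain i where i: "i < n" "H \<subseteq> M i" "\<not> K \<subseteq> M i" using F3 less.prems by blast
        have sMi: "(M i, carrier G) \<in> T" using T(2) i(1) unfolding Ms_def by auto
        have r: "(M i \<inter> K, K) \<in> T"
          using T(1) sMi less.prems(2) subcar[OF less.prems(2)] unfolding transfer_system_def by blast
        have fK: "finite K" using subcar[OF less.prems(2)] assms(2) finite_subset by blast
        have "card (K \<inter> M i) < card K"
          using fK i(3) by (intro psubset_card_mono) auto
        moreover have "subgroup (K \<inter> M i) G" using subgroup_Int less.prems(2) Msub[OF i(1)] by blast
        moreover have "H \<subseteq> K \<inter> M i" using less.prems(3) i(2) by blast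
        ultimately have "(H, K \<inter> M i) \<in> T" using less.hyps less.prems(1) by blast
        moreover have "(K \<inter> M i, K) \<in> T" using r by (simp add: Int_commute)
        ultimately show ?thesis using T(1) unfolding transfer_system_def by blast
      qed
    qed
    show ?thesis unfolding arrows_def using main by auto
  qed
  have Ms_arr: "Ms \<subseteq> arrows G"
    unfolding Ms_def arrows_def using Msub subgroup_self subcar[OF Msub] by auto
  have genMs: "generated_ts G Ms = arrows G"
  proof
    show "generated_ts G Ms \<subseteq> arrows G" by (rule gen_le[OF TSall Ms_arr])
    show "arrows G \<subseteq> generated_ts G Ms"
      unfolding generated_ts_def using all_in by blast
  qed
  have sarr: "(M i, carrier G) \<in> arrows G" if "i < n" for i using Ms_arr that unfolding Ms_def by auto
  have minMs: "minimal_generating_set G Ms (arrows G)"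
    unfolding minimal_generating_set_def
  proof (intro conjI)
    show "Ms \<subseteq> arrows G" by (rule Ms_arr)
    show "\<forall>(H, K)\<in>Ms. H \<noteq> K" unfolding Ms_def using Mne by auto
    show "generated_ts G Ms = arrows G" by (rule genMs)
    show "\<forall>s\<in>Ms. generated_ts G (Ms - {s}) \<noteq> arrows G"
    proof
      fix s assume "s \<in> Ms"
      then obtain i where i: "i < n" "s = (M i, carrier G)" unfolding Ms_def by auto
      have "Ms - {s} \<subseteq> arrows G - {s}" using Ms_arr by blast
      then have "generated_ts G (Ms - {s}) \<subseteq> arrows G - {s}" using gen_le TSi[OF i(1)] i(2) by blast
      then show "generated_ts G (Ms - {s}) \<noteq> arrows G" using sarr[OF i(1)] i(2) by blast
    qed
  qed
  have uniq: "S = Ms" if S: "minimal_generating_set G S (arrows G)" for S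
  proof -
    have S1: "S \<subseteq> arrows G" "generated_ts G S = arrows G"
      "\<forall>s\<in>S. generated_ts G (S - {s}) \<noteq> arrows G"
      using S unfolding minimal_generating_set_def by auto
    have "Ms \<subseteq> S"
    proof
      fix s assume "s \<in> Ms"
      then obtain i where i: "i < n" "s = (M i, carrier G)" unfolding Ms_def by auto
      show "s \<in> S"
      proof (rule ccontr)
        assume "s \<notin> S"
        then have "S \<subseteq> arrows G - {s}" using S1(1) by blast
        then have "generated_ts G S \<subseteq> arrows G - {s}" using gen_le TSi[OF i(1)] i(2) by blast
        then show False using S1(2) sarr[OF i(1)] i(2) by blast
      qed
    qed
    moreover have "S \<subseteq> Ms"
    proof
      fix s assume s: "s \<in> S"
      show "s \<in> Ms"
      proof (rule ccontr)
        assume "s \<notin> Ms"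
        then have "Ms \<subseteq> S - {s}" using \<open>Ms \<subseteq> S\<close> by blast
        then have "arrows G \<subseteq> generated_ts G (S - {s})" using mono genMs by blast
        moreover have "generated_ts G (S - {s}) \<subseteq> arrows G" using gen_le[OF TSall] S1(1) by blast
        ultimately show False using S1(3) s by blast
      qed
    qed
    ultimately show ?thesis by blast
  qed
  have "(SOME S. minimal_generating_set G S (arrows G)) = Ms"
    using minMs uniq by (rule some_equality)
  then have "width G = card Ms" unfolding width_def mgen_def by simp
  also have "\<dots> = n" unfolding Ms_def using card_image[OF Minj] by simp
  finally show ?thesis .
qed

end
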